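(* Let $e\geqslant 1$ be an integer and $b\geqslant 2$ an even integer, and let $D_{e,b}$ be the cycle set for $T_{e,b}$. Assume there exists a positive integer $h$ such that $h+x$ is $(e,b)$-happy for every $x\in D_{e,b}$. Then for every positive integer $m$ there exists a positive integer $l$ such that $l+1,l+2,\ldots,l+m$ are all $(e,b)$-happy.
   Context: For a positive integer $n=\sum_{j=0}^k a_j b^j$ with $0\leqslant a_j<b$, $T_{e,b}(n)=\sum_{j=0}^k a_j^e$; $T_{e,b}^r$ is the $r$-th iterate, $T_{e,b}^0(n)=n$. A positive integer $n$ is $(e,b)$-happy if $T_{e,b}^r(n)=1$ for some $r\geqslant 0$. A set $D_{e,b}$ of positive integers is a cycle set for $T_{e,b}$ if (1) for every positive integer $n$ there is $r\geqslant 0$ with $T_{e,b}^r(n)\in D_{e,b}$; (2) $T_{e,b}(x)\in D_{e,b}$ for all $x\in D_{e,b}$; (3) for every $x\in D_{e,b}$ there is $r\geqslant 1$ with $T_{e,b}^r(x)=x$. Such a set is finite and uniquely determined by $e,b$ (it is the set of positive integers $x$ with $T_{e,b}^r(x)=x$ for some $r\geqslant1$). *)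

theory Defs
  imports Main
begin

function digits :: "nat \<Rightarrow> nat \<Rightarrow> nat list" where
  "digits b n = (if n = 0 \<or> b < 2 then [] else (n mod b) # digits b (n div b))"
  by auto
termination by (relation "measure (\<lambda>(b, n). n)") auto

definition T :: "nat \<Rightarrow> nat \<Rightarrow> nat \<Rightarrow> nat" where
  "T e b n = sum_list (map (\<lambda>a. a ^ e) (digits b n))"

definition happy :: "nat \<Rightarrow> nat \<Rightarrow> nat \<Rightarrow> bool" where
  "happy e b n \<longleftrightarrow> n > 0 \<and> (\<exists>r. (T e b ^^ r) n = 1)"

definition cycle_set :: "nat \<Rightarrow> nat \<Rightarrow> nat set" where
  "cycle_set e b = {x. x > 0 \<and> (\<exists>r\<ge>1. (T e b ^^ r) x = x)}"

end

theory Submission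
  imports Defs
begin

lemma T_unfold:
  assumes "b \<ge> 2"
  shows "T e b n = (if n = 0 then 0 else (n mod b)^e + T e b (n div b))"
  unfolding T_def using assms by (subst digits.simps) auto

lemma T_pos:
  assumes "b \<ge> 2" "e \<ge> 1" "n > 0"
  shows "T e b n > 0"
  using assms(3)
proof (induction n rule: less_induct)
  case (less n)
  show ?case
  proof (cases "n mod b = 0")
    case True
    then have "b dvd n" by auto
    then have "b \<le> n" using less.prems by (rule dvd_imp_le)
    then have "n div b > 0" using assms(1) by (simp add: div_greater_zero_iff)
    moreover have "n div b < n" using less.prems assms(1) by simp
    ultimately have "T e b (n div b) > 0" using less.IH by blast
    then show ?thesis using less.prems by (subst T_unfold[OF assms(1)]) simp
  next
    case False
    then show ?thesis using less.prems by (subst T_unfold[OF assms(1)]) simp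
  qed
qed

lemma T_le_cn:
  assumes "b \<ge> 2"
  shows "T e b n \<le> (b-1)^e * n"
proof (induction n rule: less_induct)
  case (less n)
  show ?case
  proof (cases "n = 0")
    case True then show ?thesis by (subst T_unfold[OF assms]) simp
  next
    case False
    have q: "n div b < n" using False assms by simp
    have d: "(n mod b)^e \<le> (b-1)^e"
      by (rule power_mono) (use assms in \<open>auto simp: less_Suc_eq_le[symmetric]\<close>)
    have "T e b n = (n mod b)^e + T e b (n div b)" using False by (subst T_unfold[OF assms]) simp
    also have "\<dots> \<le> (b-1)^e + (b-1)^e * (n div b)" using d less.IH[OF q] by simp
    also have "\<dots> = (b-1)^e * (n div b + 1)" by simp
    also have "\<dots> \<le> (b-1)^e * n" using q by (intro mult_le_mono2) simp
    finally show ?thesis .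
  qed
qed

lemma T_lin:
  fixes e b n :: nat
  assumes "b \<ge> 2"
  defines "c \<equiv> (b-1)^e"
  defines "K \<equiv> 2 * c * ((2*c+1)*b)"
  shows "2 * T e b n \<le> n + K"
proof (induction n rule: less_induct)
  case (less n)
  show ?case
  proof (cases "n < (2*c+1)*b")
    case True
    have "T e b n \<le> c * n" using T_le_cn[OF assms(1)] c_def by simp
    also have "\<dots> \<le> c * ((2*c+1)*b)" using True by simp
    finally show ?thesis unfolding K_def by simp
  next
    case False
    then have n0: "n \<noteq> 0" using assms by auto
    have q: "n div b < n" using n0 assms by simp
    have "(2*c+1)*b div b \<le> n div b" by (rule div_le_mono) (use False in simp)
    then have qb: "n div b \<ge> 2*c+1" using assms by simp
    have d: "(n mod b)^e \<le> c" unfolding c_def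
      by (rule power_mono) (use assms in \<open>auto simp: less_Suc_eq_le[symmetric]\<close>)
    have nq: "n \<ge> b * (n div b)" by simp
    have "b * (n div b) \<ge> 2 * (n div b)" using assms by simp
    have "2 * T e b n = 2*(n mod b)^e + 2*T e b (n div b)" using n0 by (subst T_unfold[OF assms(1)]) simp
    also have "\<dots> \<le> 2*c + (n div b + K)" using d less.IH[OF q] by simp
    also have "\<dots> \<le> n + K" using qb nq \<open>b * (n div b) \<ge> 2 * (n div b)\<close> by linarith
    finally show ?thesis .
  qed
qed

lemma T_bound:
  assumes "b \<ge> 2"
  shows "\<exists>K. \<forall>n. T e b n \<le> max n K"
proof -
  obtain K where "\<forall>n. 2 * T e b n \<le> n + K" using T_lin[OF assms] by blast
  have "\<forall>n. T e b n \<le> max n K"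
  proof
    fix n
    have "2 * T e b n \<le> n + K" using \<open>\<forall>n. 2 * T e b n \<le> n + K\<close> by blast
    then show "T e b n \<le> max n K" by (cases "n \<le> K") (simp_all add: max_def)
  qed
  then show ?thesis by blast
qed


lemma T_concat:
  assumes "b \<ge> 2" "e \<ge> 1"
  shows "s < b^k \<Longrightarrow> T e b (A * b^k + s) = T e b A + T e b s"
proof (induction k arbitrary: s)
  case 0
  then show ?case by (simp add: T_unfold[OF assms(1), of e 0])
next
  case (Suc k)
  have b0: "b > 0" using assms by simp
  have sd: "s div b < b^k" using Suc.prems b0 by (simp add: div_less_iff_less_mult mult.commute)
  define n where "n = A * b^Suc k + s"
  have nn: "n = s + (A*b^k)*b" unfolding n_def by (simp add: algebra_simps)
  have nm: "n mod b = s mod b" unfolding nn by simp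
  have nd: "n div b = A * b^k + s div b" unfolding nn using b0 by simp
  have Ts: "T e b s = (s mod b)^e + T e b (s div b)"
    using assms by (subst T_unfold[OF assms(1)]) (auto simp: T_unfold[OF assms(1), of e 0])
  show ?case
  proof (cases "n = 0")
    case True
    then have "A = 0 \<or> b = 0" "s = 0" unfolding n_def by auto
    then show ?thesis using b0 n_def True by (simp add: T_unfold[OF assms(1), of e 0])
  next
    case False
    have "T e b n = (s mod b)^e + T e b (A * b^k + s div b)"
      using False nm nd by (subst T_unfold[OF assms(1)]) simp
    also have "\<dots> = T e b A + T e b s" using Suc.IH[OF sd] Ts by simp
    finally show ?thesis unfolding n_def .
  qed
qed

lemma T_repunit:
  assumes "b \<ge> 2"
  shows "T e b (\<Sum>j<y. b^j) = y"
proof (induction y)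
  case 0
  then show ?case by (simp add: T_unfold[OF assms, of e 0])
next
  case (Suc y)
  have eq: "(\<Sum>j<Suc y. b^j) = 1 + b * (\<Sum>j<y. b^j)"
    by (simp add: sum.lessThan_Suc_shift sum_distrib_left del: sum.lessThan_Suc)
  have m: "(1 + b * (\<Sum>j<y. b^j)) mod b = 1" using assms by (simp only: mod_mult_self2) simp
  have d: "(1 + b * (\<Sum>j<y. b^j)) div b = (\<Sum>j<y. b^j)" using assms by (subst div_mult_self2) auto
  show ?case unfolding eq by (subst T_unfold[OF assms]) (simp only: m d Suc.IH, simp)
qed

lemma orbit_bound:
  assumes "\<forall>n. T e b n \<le> max n K"
  shows "(T e b ^^ r) s \<le> max s K"
proof (induction r)
  case 0 then show ?case by simp
next
  case (Suc r)
  have "(T e b ^^ Suc r) s = T e b ((T e b ^^ r) s)" by simp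
  also have "\<dots> \<le> max ((T e b ^^ r) s) K" using assms by blast
  also have "\<dots> \<le> max s K" using Suc.IH by simp
  finally show ?case .
qed

lemma orbit_pos:
  assumes "b \<ge> 2" "e \<ge> 1" "s > 0"
  shows "(T e b ^^ r) s > 0"
  by (induction r) (simp_all add: assms T_pos[OF assms(1,2)])

lemma eventually_cycle:
  assumes "b \<ge> 2" "e \<ge> 1" "s > 0"
  shows "\<exists>i. \<forall>r\<ge>i. (T e b ^^ r) s \<in> cycle_set e b"
proof -
  obtain K where K: "\<forall>n. T e b n \<le> max n K" using T_bound[OF assms(1)] by blast
  define M where "M = max s K"
  define f where "f = (\<lambda>r. (T e b ^^ r) s)"
  have "f ` {0..M+1} \<subseteq> {0..M}" unfolding f_def M_def using orbit_bound[OF K] by auto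
  then have "card (f ` {0..M+1}) \<le> card {0..M}" by (intro card_mono) auto
  then have "card (f ` {0..M+1}) < card {0..M+1}" by simp
  then have "\<not> inj_on f {0..M+1}" using card_image by fastforce
  then obtain i j where ij: "i \<noteq> j" "f i = f j" unfolding inj_on_def by blast
  then obtain i j where ij: "i < j" "f i = f j"
    by (cases "i < j") (auto dest: sym simp: neq_iff)
  define p where "p = j - i"
  have p1: "p \<ge> 1" using ij p_def by simp
  have "(T e b ^^ p) (f i) = (T e b ^^ (p + i)) s" unfolding f_def by (simp add: funpow_add)
  also have "p + i = j" using ij p_def by simp
  finally have per: "(T e b ^^ p) (f i) = f i" using ij unfolding f_def by simp
  have "\<forall>r\<ge>i. (T e b ^^ r) s \<in> cycle_set e b"
  proof (intro allI impI)
    fix r assume "r \<ge> i"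
    have "(T e b ^^ (r - i)) (f i) = (T e b ^^ (r - i + i)) s" unfolding f_def by (simp add: funpow_add)
    then have r: "(T e b ^^ r) s = (T e b ^^ (r - i)) (f i)" using \<open>r \<ge> i\<close> by simp
    have "(T e b ^^ p) ((T e b ^^ (r - i)) (f i)) = (T e b ^^ (p + (r - i))) (f i)" by (simp add: funpow_add)
    also have "\<dots> = (T e b ^^ ((r - i) + p)) (f i)" by (simp add: add.commute)
    also have "\<dots> = (T e b ^^ (r - i)) ((T e b ^^ p) (f i))" by (simp add: funpow_add)
    also have "\<dots> = (T e b ^^ (r - i)) (f i)" using per by simp
    finally have c: "(T e b ^^ p) ((T e b ^^ (r - i)) (f i)) = (T e b ^^ (r - i)) (f i)" .
    have "0 < (T e b ^^ (r - i)) (f i)" using orbit_pos[OF assms, of r] r by simp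
    then show "(T e b ^^ r) s \<in> cycle_set e b"
      unfolding cycle_set_def r using c p1 by blast
  qed
  then show ?thesis by blast
qed

definition good :: "nat \<Rightarrow> nat \<Rightarrow> nat set \<Rightarrow> bool" where
  "good e b S \<longleftrightarrow> (\<exists>y>0. \<forall>s\<in>S. happy e b (y + s))"

lemma good_step:
  assumes "b \<ge> 2" "e \<ge> 1" "finite S" "good e b (T e b ` S)"
  shows "good e b S"
proof -
  obtain y where y: "y > 0" "\<forall>s\<in>S. happy e b (y + T e b s)" using assms(4) unfolding good_def by auto
  define k where "k = Max (insert 0 S)"
  have sk: "s < b^k" if "s \<in> S" for s
  proof -
    have "s \<le> k" unfolding k_def using that assms(3) by simp
    have "s < 2^s" by (rule less_exp)
    also have "\<dots> \<le> b^s" using assms(1) by (simp add: power_mono)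
    also have "\<dots> \<le> b^k" using \<open>s \<le> k\<close> assms(1) by (simp add: power_increasing)
    finally show ?thesis .
  qed
  define A where "A = (\<Sum>j<y. b^j)"
  have "b^0 \<le> (\<Sum>j<y. b^j)" by (rule member_le_sum) (use y(1) in auto)
  then have A0: "A > 0" unfolding A_def by simp
  define l where "l = A * b^k"
  have l0: "l > 0" unfolding l_def using A0 assms(1) by simp
  have "\<forall>s\<in>S. happy e b (l + s)"
  proof
    fix s assume s: "s \<in> S"
    have "T e b (l + s) = y + T e b s"
      unfolding l_def using T_concat[OF assms(1,2) sk[OF s]] T_repunit[OF assms(1)] A_def by simp
    moreover obtain r where "(T e b ^^ r) (y + T e b s) = 1" using y(2) s unfolding happy_def by auto
    ultimately have "(T e b ^^ r) (T e b (l + s)) = 1" by simp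
    then have "(T e b ^^ Suc r) (l + s) = 1" by (simp only: funpow_Suc_right comp_apply)
    then show "happy e b (l + s)" unfolding happy_def using l0 by blast
  qed
  then show ?thesis unfolding good_def using l0 by auto
qed

lemma good_iter:
  assumes "b \<ge> 2" "e \<ge> 1"
  shows "finite S \<Longrightarrow> good e b ((T e b ^^ r) ` S) \<Longrightarrow> good e b S"
proof (induction r arbitrary: S)
  case 0 then show ?case by simp
next
  case (Suc r)
  have "(T e b ^^ Suc r) ` S = (T e b ^^ r) ` (T e b ` S)"
    by (simp only: funpow_Suc_right image_comp)
  then have "good e b (T e b ` S)" using Suc.IH[of "T e b ` S"] Suc.prems by simp
  then show ?case using good_step[OF assms Suc.prems(1)] by simp
qed

theorem corollary2p1:
  fixes e b :: nat
  assumes "e \<ge> 1" and "b \<ge> 2" and "even b"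
    and "\<exists>h>0. \<forall>x\<in>cycle_set e b. happy e b (h + x)"
  shows "\<forall>m>0. \<exists>l>0. \<forall>i\<in>{1..m}. happy e b (l + i)"
proof (intro allI impI)
  fix m :: nat assume "m > 0"
  obtain h where h: "h > 0" "\<forall>x\<in>cycle_set e b. happy e b (h + x)" using assms(4) by blast
  have "\<forall>s\<in>{1..m}. \<exists>i. \<forall>r\<ge>i. (T e b ^^ r) s \<in> cycle_set e b"
    using eventually_cycle[OF assms(2,1)] by auto
  from bchoice[OF this] obtain g where g: "\<forall>s\<in>{1..m}. \<forall>r\<ge>g s. (T e b ^^ r) s \<in> cycle_set e b"
    by blast
  define r where "r = sum g {1..m}"
  have "(T e b ^^ r) ` {1..m} \<subseteq> cycle_set e b"
  proof
    fix x assume "x \<in> (T e b ^^ r) ` {1..m}"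
    then obtain s where s: "s \<in> {1..m}" "x = (T e b ^^ r) s" by blast
    have "g s \<le> r" unfolding r_def using s(1) by (intro member_le_sum) auto
    then show "x \<in> cycle_set e b" using g s by auto
  qed
  then have "good e b ((T e b ^^ r) ` {1..m})" unfolding good_def using h by blast
  then have "good e b {1..m}" using good_iter[OF assms(2,1)] by blast
  then show "\<exists>l>0. \<forall>i\<in>{1..m}. happy e b (l + i)" unfolding good_def by blast
qed

end
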